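(* Let $(M,s)$ be an initial $\mathbf{S5}$-state of a definite action theory such that every $u\in M[S]$ is reachable from $s$. Let $u,v\in M[S]$ with $M[\pi](u)=M[\pi](v)$. Then for every agent $i$ and every $x\in M[S]$ with $(u,x)\in M[i]$ there exists $y\in M[S]$ with $(v,y)\in M[i]$ and $M[\pi](x)=M[\pi](y)$.
   Context: Agents $\mathcal{AG}=\{1,\dots,n\}$, finite set of fluents $\mathcal F$. Belief formulae are built from propositional (fluent) formulae over $\mathcal F$ with $\mathbf B_i$, Boolean connectives and $\mathbf E_\alpha,\mathbf C_\alpha$; $\mathbf C=\mathbf C_{\mathcal{AG}}$. Kripke structures $M$: worlds $M[S]$, interpretations $M[\pi](u)\subseteq\mathcal F$, relations $M[i]$; state $(M,s)$; standard semantics ($\mathbf B_i\varphi$: $\varphi$ at all $M[i]$-successors; $\mathbf E_\alpha$: all $\mathbf B_i$, $i\in\alpha$; $\mathbf C_\alpha\varphi$: $\mathbf E^k_\alpha\varphi$ for all $k\ge0$). $\mathbf{S5}$-state: every $M[i]$ an equivalence relation. $v$ is reachable from $u$ if connected by a finite (possibly empty) chain of pairs each in some $M[j]$. An action theory $(I,D)$ consists of a domain $D$ (action descriptions) and a set $I$ of statements "initially $\varphi$"; an initial $\mathbf{S5}$-state of it is an $\mathbf{S5}$-state satisfying every $\varphi$ with "initially $\varphi$" $\in I$. It is definite if every statement of $I$ is of one of the forms initially $\varphi$, initially $\mathbf C\varphi$, initially $\mathbf C(\mathbf B_i\varphi)$, initially $\mathbf C(\mathbf B_i\varphi\vee\mathbf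 B_i\neg\varphi)$, initially $\mathbf C(\neg\mathbf B_i\varphi\wedge\neg\mathbf B_i\neg\varphi)$ ($\varphi$ fluent formula, $i$ agent), and for every fluent formula $\varphi$ and agent $i$, $I$ contains a statement of one of the last three forms with this $i$ and $\varphi$. *)

theory Defs
  imports Main
begin

datatype 'f fform = FAtom 'f | FNot "'f fform" | FAnd "'f fform" "'f fform" | FOr "'f fform" "'f fform"

datatype ('f, 'ag) bform =
    BFl "'f fform"
  | BB 'ag "('f, 'ag) bform"
  | BNot "('f, 'ag) bform"
  | BAnd "('f, 'ag) bform" "('f, 'ag) bform"
  | BOr "('f, 'ag) bform" "('f, 'ag) bform"
  | BE "'ag set" "('f, 'ag) bform"
  | BC "'ag set" "('f, 'ag) bform"

text \<open>Kripke structure: worlds M[S], interpretation M[pi], relations M[i].\<close>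
record ('w, 'f, 'ag) kripke =
  worlds :: "'w set"
  interp :: "'w \<Rightarrow> 'f set"
  rel :: "'ag \<Rightarrow> ('w \<times> 'w) set"

definition wf_kripke :: "('w, 'f, 'ag) kripke \<Rightarrow> bool" where
  "wf_kripke M \<longleftrightarrow> (\<forall>i. rel M i \<subseteq> worlds M \<times> worlds M)"

fun fsat :: "'f set \<Rightarrow> 'f fform \<Rightarrow> bool" where
  "fsat I (FAtom f) = (f \<in> I)"
| "fsat I (FNot p) = (\<not> fsat I p)"
| "fsat I (FAnd p q) = (fsat I p \<and> fsat I q)"
| "fsat I (FOr p q) = (fsat I p \<or> fsat I q)"

definition Eop :: "('w, 'f, 'ag) kripke \<Rightarrow> 'ag set \<Rightarrow> 'w set \<Rightarrow> 'w set" where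
  "Eop M A X = {u \<in> worlds M. \<forall>i\<in>A. \<forall>v. (u, v) \<in> rel M i \<longrightarrow> v \<in> X}"

fun ext :: "('w, 'f, 'ag) kripke \<Rightarrow> ('f, 'ag) bform \<Rightarrow> 'w set" where
  "ext M (BFl p) = {u \<in> worlds M. fsat (interp M u) p}"
| "ext M (BB i \<phi>) = {u \<in> worlds M. \<forall>v. (u, v) \<in> rel M i \<longrightarrow> v \<in> ext M \<phi>}"
| "ext M (BNot \<phi>) = worlds M - ext M \<phi>"
| "ext M (BAnd \<phi> \<psi>) = ext M \<phi> \<inter> ext M \<psi>"
| "ext M (BOr \<phi> \<psi>) = ext M \<phi> \<union> ext M \<psi>"
| "ext M (BE A \<phi>) = Eop M A (ext M \<phi>)"
| "ext M (BC A \<phi>) = (\<Inter>k. (Eop M A ^^ k) (ext M \<phi>))"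

definition holds :: "('w, 'f, 'ag) kripke \<Rightarrow> 'w \<Rightarrow> ('f, 'ag) bform \<Rightarrow> bool" where
  "holds M s \<phi> \<longleftrightarrow> s \<in> ext M \<phi>"

definition S5_state :: "('w, 'f, 'ag) kripke \<Rightarrow> 'w \<Rightarrow> bool" where
  "S5_state M s \<longleftrightarrow> wf_kripke M \<and> s \<in> worlds M \<and> (\<forall>i. equiv (worlds M) (rel M i))"

definition reachable :: "('w, 'f, 'ag) kripke \<Rightarrow> 'w \<Rightarrow> 'w \<Rightarrow> bool" where
  "reachable M u v \<longleftrightarrow> (u, v) \<in> (\<Union>j. rel M j)\<^sup>*"

abbreviation Call :: "('f, 'ag) bform \<Rightarrow> ('f, 'ag) bform" where
  "Call \<phi> \<equiv> BC UNIV \<phi>"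

text \<open>An initial-state description I is the set of formulae phi with "initially phi" in I.\<close>
definition definite :: "('f, 'ag) bform set \<Rightarrow> bool" where
  "definite I \<longleftrightarrow>
     (\<forall>\<psi>\<in>I. (\<exists>p. \<psi> = BFl p)
           \<or> (\<exists>p. \<psi> = Call (BFl p))
           \<or> (\<exists>p i. \<psi> = Call (BB i (BFl p)))
           \<or> (\<exists>p i. \<psi> = Call (BOr (BB i (BFl p)) (BB i (BFl (FNot p)))))
           \<or> (\<exists>p i. \<psi> = Call (BAnd (BNot (BB i (BFl p))) (BNot (BB i (BFl (FNot p)))))))
   \<and> (\<forall>p i. Call (BB i (BFl p)) \<in> I
           \<or> Call (BOr (BB i (BFl p)) (BB i (BFl (FNot p)))) \<in> I
           \<or> Call (BAnd (BNot (BB i (BFl p))) (BNot (BB i (BFl (FNot p))))) \<in> I)"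

definition initial_S5_state :: "('f, 'ag) bform set \<Rightarrow> ('w, 'f, 'ag) kripke \<Rightarrow> 'w \<Rightarrow> bool" where
  "initial_S5_state I M s \<longleftrightarrow> S5_state M s \<and> (\<forall>\<phi>\<in>I. holds M s \<phi>)"

end

theory Submission
  imports Defs
begin

fun charf :: "'f list \<Rightarrow> 'f set \<Rightarrow> 'f fform" where
  "charf [] S = FOr (FAtom undefined) (FNot (FAtom undefined))"
| "charf (f # xs) S = FAnd (if f \<in> S then FAtom f else FNot (FAtom f)) (charf xs S)"

lemma charf_sat: "fsat T (charf xs S) \<longleftrightarrow> (\<forall>f\<in>set xs. f \<in> T \<longleftrightarrow> f \<in> S)"
  by (induction xs) auto

lemma charf_univ: "set xs = UNIV \<Longrightarrow> fsat T (charf xs S) \<longleftrightarrow> T = S"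
  by (auto simp: charf_sat)

lemma equiv_refl: "equiv A r \<Longrightarrow> w \<in> A \<Longrightarrow> (w, w) \<in> r"
  by (meson equivE refl_onD)

lemma C_prop:
  assumes "(a, w) \<in> (\<Union>j. rel M j)\<^sup>*" "\<forall>k. a \<in> (Eop M UNIV ^^ k) X"
  shows "\<forall>k. w \<in> (Eop M UNIV ^^ k) X"
  using assms
proof (induction rule: rtrancl_induct)
  case base then show ?case by simp
next
  case (step b c)
  show ?case
  proof
    fix k
    have "b \<in> (Eop M UNIV ^^ Suc k) X" using step by blast
    then show "c \<in> (Eop M UNIV ^^ k) X" using step(2) by (auto simp: Eop_def)
  qed
qed

lemma C_all:
  assumes "holds M s (Call \<phi>)" "reachable M s w"
  shows "w \<in> ext M \<phi>"
proof -
  have "\<forall>k. w \<in> (Eop M UNIV ^^ k) (ext M \<phi>)"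
    using C_prop[of s w M "ext M \<phi>"] assms by (auto simp: holds_def reachable_def)
  then show ?thesis by (metis funpow_0)
qed

lemma BB_iff: "u \<in> ext M (BB i \<phi>) \<longleftrightarrow> u \<in> worlds M \<and> (\<forall>v. (u, v) \<in> rel M i \<longrightarrow> v \<in> ext M \<phi>)"
  by simp

lemma BFl_iff: "u \<in> ext M (BFl p) \<longleftrightarrow> u \<in> worlds M \<and> fsat (interp M u) p"
  by simp

theorem lemma12:
  fixes I :: "('f::finite, 'ag::finite) bform set"
    and M :: "('w, 'f, 'ag) kripke"
  assumes "definite I"
    and "initial_S5_state I M s"
    and "\<forall>u\<in>worlds M. reachable M s u"
    and "u \<in> worlds M" and "v \<in> worlds M"
    and "interp M u = interp M v"
  shows "\<forall>i. \<forall>x\<in>worlds M. (u, x) \<in> rel M i \<longrightarrow>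
           (\<exists>y\<in>worlds M. (v, y) \<in> rel M i \<and> interp M x = interp M y)"
proof (intro allI ballI impI)
  fix i x
  assume x: "x \<in> worlds M" and ux: "(u, x) \<in> rel M i"
  obtain xs :: "'f list" where xs: "set xs = UNIV" using finite_list[of "UNIV :: 'f set"] by auto
  define p where "p = charf xs (interp M x)"
  have psat: "\<And>T. fsat T p \<longleftrightarrow> T = interp M x" unfolding p_def using charf_univ[OF xs] .
  have S5: "S5_state M s" using assms(2) unfolding initial_S5_state_def by (rule conjunct1)
  have hI: "\<forall>\<phi>\<in>I. holds M s \<phi>" using assms(2) unfolding initial_S5_state_def by (rule conjunct2)
  have eq: "equiv (worlds M) (rel M i)" using S5 unfolding S5_state_def by blast
  have wf: "rel M i \<subseteq> worlds M \<times> worlds M" using S5 unfolding S5_state_def wf_kripke_def by blast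
  have refl: "\<And>w. w \<in> worlds M \<Longrightarrow> (w, w) \<in> rel M i" using equiv_refl[OF eq] .
  have allw: "w \<in> ext M \<phi>" if a: "Call \<phi> \<in> I" "w \<in> worlds M" for \<phi> w
  proof (rule C_all[of M s \<phi> w])
    show "holds M s (Call \<phi>)" using hI a(1) by blast
    show "reachable M s w" using assms(3) a(2) by blast
  qed
  have d2: "\<forall>p i. Call (BB i (BFl p)) \<in> I
           \<or> Call (BOr (BB i (BFl p)) (BB i (BFl (FNot p)))) \<in> I
           \<or> Call (BAnd (BNot (BB i (BFl p))) (BNot (BB i (BFl (FNot p))))) \<in> I"
    using assms(1) unfolding definite_def by (rule conjunct2)
  have fu: "fsat (interp M u) p \<Longrightarrow> \<exists>y\<in>worlds M. (v, y) \<in> rel M i \<and> interp M x = interp M y"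
  proof -
    assume "fsat (interp M u) p"
    then have "interp M v = interp M x" using psat assms(6) by simp
    then show ?thesis using refl[OF assms(5)] assms(5) by metis
  qed
  have "Call (BB i (BFl p)) \<in> I
           \<or> Call (BOr (BB i (BFl p)) (BB i (BFl (FNot p)))) \<in> I
           \<or> Call (BAnd (BNot (BB i (BFl p))) (BNot (BB i (BFl (FNot p))))) \<in> I"
    using d2 by blast
  then show "\<exists>y\<in>worlds M. (v, y) \<in> rel M i \<and> interp M x = interp M y"
  proof (elim disjE)
    assume "Call (BB i (BFl p)) \<in> I"
    from allw[OF this assms(4)] have "u \<in> ext M (BB i (BFl p))" .
    then have "u \<in> ext M (BFl p)" using refl[OF assms(4)] unfolding BB_iff by blast
    then show ?thesis using fu unfolding BFl_iff by blast
  next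
    assume "Call (BOr (BB i (BFl p)) (BB i (BFl (FNot p)))) \<in> I"
    from allw[OF this assms(4)] have "u \<in> ext M (BB i (BFl p)) \<or> u \<in> ext M (BB i (BFl (FNot p)))"
      by simp
    moreover have "x \<in> ext M (BFl p)" using psat x by simp
    ultimately have "u \<in> ext M (BB i (BFl p))" using ux x unfolding BB_iff BFl_iff by auto
    then have "u \<in> ext M (BFl p)" using refl[OF assms(4)] unfolding BB_iff by blast
    then show ?thesis using fu unfolding BFl_iff by blast
  next
    assume "Call (BAnd (BNot (BB i (BFl p))) (BNot (BB i (BFl (FNot p))))) \<in> I"
    from allw[OF this assms(5)] have "v \<notin> ext M (BB i (BFl (FNot p)))"
      by simp
    then obtain y where y: "(v, y) \<in> rel M i" "y \<notin> ext M (BFl (FNot p))"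
      unfolding BB_iff using assms(5) by blast
    have yw: "y \<in> worlds M" using y(1) wf by blast
    have "fsat (interp M y) p" using y(2) yw by simp
    then show ?thesis using y(1) yw psat by auto
  qed
qed

end
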